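(* Let $H\in\mathbb{R}^{n\times n}$ be symmetric positive definite with LDL decomposition $H=(\grave U+I)D(\grave U+I)^T$ ($\grave U$ strictly upper triangular, $D$ diagonal). Let $w\in\mathbb{R}^{1\times n}$ and let $\mathcal{Q}:\mathbb{R}\to\mathbb{R}$ be any rounding map, for example nearest rounding to a finite grid with clamping. Run the OPTQ procedure on $w$. Then for each $t=1,\dots,n$ the value produced by OPTQ is $$\hat w_t=\mathcal{Q}\big(w_t+(w-\hat w)\grave U e_t\big)=\mathcal{Q}\big(w_t-(\hat w_{1:(t-1)}-w_{1:(t-1)})\grave U_{1:(t-1),t}\big).$$ Thus OPTQ coincides with adaptive rounding with linear feedback using $U=\grave U$ (i.e. LDLQ).
   Context: OPTQ procedure: quantize the entries of the row vector $w$ in the order $t=1,\dots,n$. At step $t$, with $\hat w_1,\dots,\hat w_{t-1}$ already fixed, set $\Delta_{1:(t-1)}=\hat w_{1:(t-1)}-w_{1:(t-1)}$. Let $\Delta^*_{t:n}\in\mathbb{R}^{1\times(n-t+1)}$ minimize the proxy loss $\Delta H\Delta^T$ over $\Delta_{t:n}$, where $\Delta=(\Delta_{1:(t-1)},\Delta_{t:n})$. Explicitly, $\Delta^*_{t:n}=-\Delta_{1:(t-1)}H_{1:(t-1),t:n}(H_{t:n,t:n})^{-1}$. Then set $\hat w_t=\mathcal{Q}(w_t+(\Delta^*_{t:n})_1)$, where $(\cdot)_1$ is the first entry. $e_t$ is the $t$-th standard basis vector. Subscript ranges denote submatrices and subvectors. *)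

theory Defs
  imports "Jordan_Normal_Form.Matrix" "Jordan_Normal_Form.Gauss_Jordan_Elimination"
begin

(* Indices are 0-based: entries 0..n-1 correspond to 1..n of the paper. *)

definition sym_pos_def_mat :: "real mat \<Rightarrow> nat \<Rightarrow> bool" where
  "sym_pos_def_mat H n \<longleftrightarrow> H \<in> carrier_mat n n \<and> transpose_mat H = H \<and>
     (\<forall>x \<in> carrier_vec n. x \<noteq> 0\<^sub>v n \<longrightarrow> x \<bullet> (H *\<^sub>v x) > 0)"

definition strictly_upper_triangular :: "real mat \<Rightarrow> bool" where
  "strictly_upper_triangular U \<longleftrightarrow>
     (\<forall>i < dim_row U. \<forall>j < dim_col U. j \<le> i \<longrightarrow> U $$ (i, j) = 0)"

text \<open>Optimal continuation Delta*_{t:n} (a 1 x (n-t) row matrix) at step t (0-based),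
  given the already quantized prefix p = [hat w_0, ..., hat w_{t-1}]:
  Delta*_{t:n} = - Delta_{0:t} H_{0:t, t:n} (H_{t:n,t:n})^{-1}.\<close>
definition optq_delta :: "real mat \<Rightarrow> real vec \<Rightarrow> real list \<Rightarrow> nat \<Rightarrow> real mat" where
  "optq_delta H w p t =
     (let n = dim_row H;
          Dl = mat 1 t (\<lambda>(_, j). p ! j - w $ j);
          B = mat t (n - t) (\<lambda>(i, j). H $$ (i, t + j));
          C = mat (n - t) (n - t) (\<lambda>(i, j). H $$ (t + i, t + j))
      in - (Dl * B * the (mat_inverse C)))"

fun optq :: "real mat \<Rightarrow> (real \<Rightarrow> real) \<Rightarrow> real vec \<Rightarrow> nat \<Rightarrow> real list" where
  "optq H Q w 0 = []"
| "optq H Q w (Suc t) =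
     (let p = optq H Q w t in p @ [Q (w $ t + optq_delta H w p t $$ (0, 0))])"

end

theory Submission imports Defs "Jordan_Normal_Form.Determinant" begin
lemma sum_split_shift: "t \<le> n \<Longrightarrow> (\<Sum>b<n. f b) = (\<Sum>b<t. f b) + (\<Sum>j<n-t. f (t+j::nat))"
proof -
  assume "t \<le> n"
  then have "{..<n} = {..<t} \<union> {t..<n}" by auto
  moreover have "sum f ({..<t} \<union> {t..<n}) = sum f {..<t} + sum f {t..<n}" by (rule sum.union_disjoint) auto
  ultimately
  have "(\<Sum>b<n. f b) = (\<Sum>b<t. f b) + (\<Sum>b\<in>{t..<n}. f b)"
    by simp
  also have "(\<Sum>b\<in>{t..<n}. f b) = (\<Sum>j<n-t. f (t+j))"
  proof -
    have "(\<Sum>b\<in>{t..<n}. f b) = (\<Sum>b\<in>{0+t..<(n-t)+t}. f b)" using \<open>t \<le> n\<close> by simp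
    also have "\<dots> = (\<Sum>j\<in>{0..<n-t}. f (j+t))" by (rule sum.shift_bounds_nat_ivl)
    finally show ?thesis by (simp add: lessThan_atLeast0 add.commute)
  qed
  finally show ?thesis .
qed

lemma H_entry:
  fixes n :: nat and H U D :: "real mat"
  assumes U: "U \<in> carrier_mat n n" and D: "D \<in> carrier_mat n n"
    and dD: "diagonal_mat D"
    and Hd: "H = (U + 1\<^sub>m n) * D * transpose_mat (U + 1\<^sub>m n)"
    and a: "a < n" and b: "b < n"
  shows "H $$ (a,b) = (\<Sum>k<n. (U$$(a,k) + (if a = k then 1 else 0)) * D$$(k,k) * (U$$(b,k) + (if b = k then 1 else 0)))"
proof -
  let ?L = "U + 1\<^sub>m n"
  have LD: "(?L * D) $$ (a,k) = (U$$(a,k) + (if a = k then 1 else 0)) * D$$(k,k)" if k: "k < n" for k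
  proof -
    have "(?L * D) $$ (a,k) = (\<Sum>l\<in>{0..<n}. ?L $$ (a,l) * D $$ (l,k))"
      using U D a k by (auto simp: scalar_prod_def intro!: sum.cong)
    also have "\<dots> = (\<Sum>l\<in>{0..<n}. if l = k then ?L $$ (a,l) * D $$ (l,k) else 0)"
      using dD D k unfolding diagonal_mat_def by (intro sum.cong) auto
    also have "\<dots> = ?L $$ (a,k) * D $$ (k,k)" using k by simp
    finally show ?thesis using U a k by simp
  qed
  have "H $$ (a,b) = row (?L*D) a \<bullet> col (transpose_mat ?L) b"
    unfolding Hd by (rule index_mult_mat(1)) (use U D a b in auto)
  also have "\<dots> = (\<Sum>k\<in>{0..<n}. (?L * D) $$ (a,k) * ?L $$ (b,k))"
    unfolding scalar_prod_def using U D a b by (intro sum.cong) auto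
  also have "\<dots> = (\<Sum>k<n. (U$$(a,k) + (if a = k then 1 else 0)) * D$$(k,k) * (U$$(b,k) + (if b = k then 1 else 0)))"
    unfolding atLeast0LessThan
  proof (intro sum.cong refl)
    fix k assume "k \<in> {..<n}" then have k: "k < n" by simp
    show "(?L * D) $$ (a,k) * ?L $$ (b,k) = (U$$(a,k) + (if a = k then 1 else 0)) * D$$(k,k) * (U$$(b,k) + (if b = k then 1 else 0))"
      by (simp only: LD[OF k]) (use U b k in simp)
  qed
  finally show ?thesis .
qed


lemma delta_val:
  fixes n :: nat and H U D :: "real mat" and w :: "real vec" and p :: "real list"
  assumes spd: "sym_pos_def_mat H n"
    and U: "U \<in> carrier_mat n n" and D: "D \<in> carrier_mat n n"
    and sU: "strictly_upper_triangular U" and dD: "diagonal_mat D"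
    and Hd: "H = (U + 1\<^sub>m n) * D * transpose_mat (U + 1\<^sub>m n)"
    and t: "t < n"
  shows "optq_delta H w p t $$ (0,0) = - (\<Sum>j<t. (p ! j - w $ j) * U $$ (j, t))"
proof -
  define l where "l = (\<lambda>i j. U$$(i,j) + (if i = j then 1 else (0::real)))"
  define d where "d = (\<lambda>k. D$$(k,k))"
  define m where "m = n - t"
  have m: "m > 0" "t + m = n" using t unfolding m_def by auto
  have Hc: "H \<in> carrier_mat n n" using spd unfolding sym_pos_def_mat_def by auto
  have hH: "H $$ (a,b) = (\<Sum>k<n. l a k * d k * l b k)" if "a < n" "b < n" for a b
    unfolding l_def d_def by (rule H_entry[OF U D dD Hd that])
  have l_low: "l i j = 0" if "i < n" "j < i" for i j
    using sU U that unfolding strictly_upper_triangular_def l_def by auto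
  have l_diag: "l i i = 1" if "i < n" for i
    using sU U that unfolding strictly_upper_triangular_def l_def by auto
  define Dl where "Dl = mat 1 t (\<lambda>(_, j). p ! j - w $ j)"
  define B where "B = mat t m (\<lambda>(i, j). H $$ (i, t + j))"
  define C where "C = mat m m (\<lambda>(i, j). H $$ (t + i, t + j))"
  have od: "optq_delta H w p t = - (Dl * B * the (mat_inverse C))"
    using Hc unfolding optq_delta_def Let_def Dl_def B_def C_def m_def by simp
  have Cc: "C \<in> carrier_mat m m" and Bc: "B \<in> carrier_mat t m" and Dlc: "Dl \<in> carrier_mat 1 t"
    unfolding C_def B_def Dl_def by auto
  have detC: "det C \<noteq> 0"
  proof
    assume "det C = 0"
    then obtain v where v: "v \<in> carrier_vec m" "v \<noteq> 0\<^sub>v m" "C *\<^sub>v v = 0\<^sub>v m"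
      using det_0_iff_vec_prod_zero_field[OF Cc] by auto
    define x where "x = vec n (\<lambda>i. if i < t then 0 else v $ (i - t))"
    have xc: "x \<in> carrier_vec n" unfolding x_def by simp
    have xn: "x \<noteq> 0\<^sub>v n"
    proof
      assume x0: "x = 0\<^sub>v n"
      have "v = 0\<^sub>v m"
      proof (rule eq_vecI)
        fix j assume "j < dim_vec (0\<^sub>v m :: real vec)"
        then have j: "j < m" by simp
        have "x $ (t + j) = 0" using x0 j m by simp
        then show "v $ j = 0\<^sub>v m $ j" using j m unfolding x_def by simp
      qed (use v in simp)
      with v show False by simp
    qed
    have "x \<bullet> (H *\<^sub>v x) = 0"
      unfolding scalar_prod_def
    proof (rule sum.neutral, intro ballI)
      fix i assume "i \<in> {0..<dim_vec (H *\<^sub>v x)}"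
      then have i: "i < n" using Hc by simp
      show "x $ i * (H *\<^sub>v x) $ i = 0"
      proof (cases "i < t")
        case True then show ?thesis unfolding x_def using i by simp
      next
        case False
        define i' where "i' = i - t"
        have i': "i' < m" "i = t + i'" using False i m unfolding i'_def by auto
        have "(H *\<^sub>v x) $ i = (\<Sum>b<n. H $$ (i,b) * x $ b)"
          using Hc i xc by (simp add: scalar_prod_def atLeast0LessThan)
        also have "\<dots> = (\<Sum>b<t. H $$ (i,b) * x $ b) + (\<Sum>j<n-t. H $$ (i,t+j) * x $ (t+j))"
          by (rule sum_split_shift) (use t in simp)
        also have "\<dots> = (\<Sum>j<m. C $$ (i',j) * v $ j)"
          unfolding x_def C_def m_def using i' t m_def by (auto intro!: sum.cong)
        also have "\<dots> = (C *\<^sub>v v) $ i'"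
          using Cc i' v(1) by (simp add: scalar_prod_def atLeast0LessThan)
        also have "\<dots> = 0" using v i' by simp
        finally show ?thesis by simp
      qed
    qed
    with spd xc xn show False unfolding sym_pos_def_mat_def by auto
  qed
  have "mat_inverse C \<noteq> None"
    using mat_inverse(1)[OF Cc, where b="()"] det_non_zero_imp_unit[OF Cc detC, of "()"] by blast
  then obtain X where X: "mat_inverse C = Some X" by auto
  from mat_inverse(2)[OF Cc X] have CX: "C * X = 1\<^sub>m m" and Xc: "X \<in> carrier_mat m m" by auto
  define g where "g = (\<lambda>k. d k * (\<Sum>j<m. l (t+j) k * X $$ (j,0)))"
  define z where "z = (\<lambda>k. g (t + k))"
  have g_low: "g k = 0" if "k < t" for k
    unfolding g_def using that m by (auto intro!: sum.neutral l_low)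
  have sumlg: "(\<Sum>k<n. l a k * g k) = (\<Sum>k<m. l a (t+k) * z k)" for a
  proof -
    have "(\<Sum>k<n. l a k * g k) = (\<Sum>k<t. l a k * g k) + (\<Sum>j<n-t. l a (t+j) * g (t+j))"
      by (rule sum_split_shift) (use t in simp)
    then show ?thesis using g_low unfolding z_def m_def by simp
  qed
  have expand: "(\<Sum>j<m. H $$ (a, t+j) * X $$ (j,0)) = (\<Sum>k<m. l a (t+k) * z k)" if a: "a < n" for a
  proof -
    have "(\<Sum>j<m. H $$ (a, t+j) * X $$ (j,0)) = (\<Sum>j<m. \<Sum>k<n. l a k * d k * l (t+j) k * X $$ (j,0))"
      using a m by (auto simp: hH sum_distrib_right intro!: sum.cong)
    also have "\<dots> = (\<Sum>k<n. \<Sum>j<m. l a k * d k * l (t+j) k * X $$ (j,0))"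
      by (rule sum.swap)
    also have "\<dots> = (\<Sum>k<n. l a k * g k)"
      unfolding g_def by (auto simp: sum_distrib_left mult.assoc intro!: sum.cong)
    finally show ?thesis using sumlg by simp
  qed
  have claim1: "(\<Sum>k<m. l (t+i) (t+k) * z k) = (if i = 0 then 1 else 0)" if i: "i < m" for i
  proof -
    have "(C * X) $$ (i,0) = (\<Sum>j<m. C $$ (i,j) * X $$ (j,0))"
      using Cc Xc i m by (simp add: scalar_prod_def atLeast0LessThan)
    also have "\<dots> = (\<Sum>j<m. H $$ (t+i, t+j) * X $$ (j,0))"
      unfolding C_def using i by (auto intro!: sum.cong)
    also have "\<dots> = (\<Sum>k<m. l (t+i) (t+k) * z k)"
      by (rule expand) (use i m in simp)
    finally show ?thesis using CX i m by simp
  qed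
  have claim2: "z i = (if i = 0 then 1 else 0)" if "i < m" for i
    using that
  proof (induction "m - i" arbitrary: i rule: less_induct)
    case (less i)
    have "(\<Sum>k<m. l (t+i) (t+k) * z k) = (\<Sum>k<m. if k = i then z k else 0)"
    proof (intro sum.cong refl)
      fix k assume "k \<in> {..<m}" then have k: "k < m" by simp
      show "l (t+i) (t+k) * z k = (if k = i then z k else 0)"
      proof (cases "k < i")
        case True then show ?thesis using l_low[of "t+i" "t+k"] less.prems m by simp
      next
        case False
        show ?thesis
        proof (cases "k = i")
          case True then show ?thesis using l_diag[of "t+i"] less.prems m by simp
        next
          case ne: False
          with False have "i < k" by simp
          then have "z k = 0" using less.hyps[of k] k by simp
          then show ?thesis using ne by simp
        qed
      qed
    qed
    also have "\<dots> = z i" using less.prems by simp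
    finally show ?case using claim1[OF less.prems] by simp
  qed
  have claim3: "(B * X) $$ (a,0) = U $$ (a,t)" if a: "a < t" for a
  proof -
    have "(B * X) $$ (a,0) = (\<Sum>j<m. B $$ (a,j) * X $$ (j,0))"
      using Bc Xc a m by (simp add: scalar_prod_def atLeast0LessThan)
    also have "\<dots> = (\<Sum>j<m. H $$ (a, t+j) * X $$ (j,0))"
      unfolding B_def using a by (auto intro!: sum.cong)
    also have "\<dots> = (\<Sum>k<m. l a (t+k) * z k)"
      by (rule expand) (use a t in simp)
    also have "\<dots> = (\<Sum>k<m. if k = 0 then l a (t+k) else 0)"
      by (rule sum.cong) (simp_all add: claim2)
    also have "\<dots> = l a t" using m by simp
    finally show ?thesis unfolding l_def using a by simp
  qed
  have "optq_delta H w p t $$ (0,0) = - ((Dl * (B * X)) $$ (0,0))"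
    unfolding od X using Dlc Bc Xc m by (simp add: index_uminus_mat)
  also have "(Dl * (B * X)) $$ (0,0) = (\<Sum>a<t. Dl $$ (0,a) * (B * X) $$ (a,0))"
    using Dlc Bc Xc m by (simp add: scalar_prod_def atLeast0LessThan)
  also have "\<dots> = (\<Sum>j<t. (p ! j - w $ j) * U $$ (j, t))"
    unfolding Dl_def using claim3 by (auto intro!: sum.cong)
  finally show ?thesis .
qed


lemma optq_len: "length (optq H Q w t) = t"
  by (induction t) (simp_all add: Let_def)

lemma optq_prefix: "t \<le> k \<Longrightarrow> optq H Q w t = take t (optq H Q w k)"
proof (induction k)
  case 0 then show ?case by simp
next
  case (Suc k)
  show ?case
  proof (cases "t = Suc k")
    case True then show ?thesis using optq_len[of H Q w "Suc k"] by simp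
  next
    case False
    then have "t \<le> k" using Suc.prems by simp
    then show ?thesis using Suc.IH optq_len[of H Q w k] by (simp add: Let_def)
  qed
qed

theorem theorem6:
  fixes n :: nat and H U D :: "real mat" and w :: "real vec" and Q :: "real \<Rightarrow> real"
  assumes "sym_pos_def_mat H n"
    and "U \<in> carrier_mat n n" and "D \<in> carrier_mat n n"
    and "strictly_upper_triangular U" and "diagonal_mat D"
    and "H = (U + 1\<^sub>m n) * D * transpose_mat (U + 1\<^sub>m n)"
    and "w \<in> carrier_vec n"
  shows "\<forall>t < n.
     optq H Q w n ! t = Q (w $ t + (w - vec n (\<lambda>j. optq H Q w n ! j)) \<bullet> col U t)
   \<and> optq H Q w n ! t = Q (w $ t - (\<Sum>j<t. (optq H Q w n ! j - w $ j) * U $$ (j, t)))"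
proof (intro allI impI)
  fix t assume t: "t < n"
  define P where "P = optq H Q w n"
  have pre: "optq H Q w t ! j = P ! j" if "j < t" for j
    using optq_prefix[of t n H Q w] t that unfolding P_def by simp
  have "P ! t = optq H Q w (Suc t) ! t"
    using optq_prefix[of "Suc t" n H Q w] t unfolding P_def by simp
  also have "\<dots> = Q (w $ t + optq_delta H w (optq H Q w t) t $$ (0, 0))"
    using optq_len[of H Q w t] by (simp add: Let_def nth_append)
  also have "optq_delta H w (optq H Q w t) t $$ (0, 0) = - (\<Sum>j<t. (optq H Q w t ! j - w $ j) * U $$ (j, t))"
    by (rule delta_val[OF assms(1-6) t])
  also have "\<dots> = - (\<Sum>j<t. (P ! j - w $ j) * U $$ (j, t))"
    using pre by simp
  finally have eq2: "P ! t = Q (w $ t - (\<Sum>j<t. (P ! j - w $ j) * U $$ (j, t)))" by simp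
  have "(w - vec n (\<lambda>j. P ! j)) \<bullet> col U t = (\<Sum>i<n. (w $ i - P ! i) * U $$ (i,t))"
    using assms(2,7) t by (simp add: scalar_prod_def atLeast0LessThan)
  also have "\<dots> = (\<Sum>i<t. (w $ i - P ! i) * U $$ (i,t)) + (\<Sum>j<n-t. (w $ (t+j) - P ! (t+j)) * U $$ (t+j,t))"
    by (rule sum_split_shift) (use t in simp)
  also have "(\<Sum>j<n-t. (w $ (t+j) - P ! (t+j)) * U $$ (t+j,t)) = 0"
    using assms(2,4) t unfolding strictly_upper_triangular_def by (intro sum.neutral) auto
  also have "(\<Sum>i<t. (w $ i - P ! i) * U $$ (i,t)) = - (\<Sum>j<t. (P ! j - w $ j) * U $$ (j, t))"
    by (simp add: sum_negf[symmetric] algebra_simps)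
  finally have "(w - vec n (\<lambda>j. P ! j)) \<bullet> col U t = - (\<Sum>j<t. (P ! j - w $ j) * U $$ (j, t))" by simp
  with eq2 show "optq H Q w n ! t = Q (w $ t + (w - vec n (\<lambda>j. optq H Q w n ! j)) \<bullet> col U t)
   \<and> optq H Q w n ! t = Q (w $ t - (\<Sum>j<t. (optq H Q w n ! j - w $ j) * U $$ (j, t)))"
    unfolding P_def by simp
qed

end
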